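(* Let $X$ be a topological space possessing an infinite metrizable gauge, let $\kappa$ be a regular cardinal with $\kappa\in\mathrm{MG}(X)$, let $G\in\mathcal{G}_\kappa$ and $d\in\mathrm{Met}(X;G)$. Let $\mathcal{F}$ be a Cauchy filter on $(X,d)$ and let $l\colon\kappa^\dagger\to G$ be a g-characteristic isotone embedding. Then there exists a map $\mathfrak{B}\colon\kappa\to\mathcal{F}$ such that: (1) each $\mathfrak{B}(\alpha)$ is a clopen subset of $X$; (2) for all $\alpha<\kappa$ and all $x,y\in\mathfrak{B}(\alpha)$ we have $d(x,y)\le l(\alpha)$; (3) if $\alpha\le\beta<\kappa$ then $\mathfrak{B}(\alpha)\supseteq\mathfrak{B}(\beta)$.
   Context: A linearly ordered Abelian group is an Abelian group with a linear order compatible with addition. For $x,y\in G_{>0}$, $x\asymp y$ iff $y\le nx$ and $x\le my$ for some $n,m\in\mathbb{Z}_{\ge1}$; $\mathrm{Arc}(G)=G_{>0}/\asymp$, ordered by $[x]\preceq[y]$ iff ($nx<y$ for all $n$) or $x\asymp y$; $\mathrm{Arc}(G)^\perp$ is $\mathrm{Arc}(G)$ with a new least element adjoined. For a bottomed linearly ordered set $S$ (least element $\perp_S$, $S^*=S\setminus\{\perp_S\}$), $\chi(S)$ is the least cardinal $\kappa>0$ such that some strictly decreasing family $(s_\alpha)_{\alpha<\kappa}$ in $S^*$ has every $t\in S^*$ bounded below by some $s_\alpha$. A $G$-metric: $d\colon X^2\to G$, $d(x,y)=0\iff x=y$, $d\ge0$, symmetric, triangle inequality; $\mathrm{Met}(X;G)$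 is the set of $G$-metrics generating the topology of $X$ via open balls of radii in $G_{>0}$. $\mathrm{MG}(X)$: cardinals $\kappa$ with some $G$, $\chi(\mathrm{Arc}(G)^\perp)=\kappa$, $\mathrm{Met}(X;G)\ne\emptyset$; infinite metrizable gauge: some $\kappa\in\mathrm{MG}(X)$ with $\kappa\ge\omega_0$. $\mathcal{G}_\kappa$: groups with $\chi(\mathrm{Arc}(G)^\perp)=\kappa$. $\kappa^\dagger$ is the set $\kappa+1=\{\alpha:\alpha\le\kappa\}$ of ordinals with reversed order (least element $\kappa$). A map $l\colon\kappa^\dagger\to G$ is an isotone embedding if it is injective and order preserving for the order of $\kappa^\dagger$ (so $\alpha\le\beta$ as ordinals implies $l(\beta)\le l(\alpha)$); it is g-characteristic if its image $Q$ satisfies $Q\subseteq G_{\ge0}$, $0\in Q$, and every $s\in G_{>0}$ has some $t\in Q\setminus\{0\}$ with $t\le s$. A filter $\mathcal{F}$ on $X$ is Cauchy if for every $\epsilon\in G_{>0}$ some $F\in\mathcal F$ has $d(x,y)<\epsilon$ for all $x,y\in F$. *)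

theory Defs
  imports "HOL-Analysis.Analysis"
begin

definition nsm :: "nat \<Rightarrow> 'g::linordered_ab_group_add \<Rightarrow> 'g" where
  "nsm n x = (\<Sum>i<n. x)"

definition arch_eq :: "'g::linordered_ab_group_add \<Rightarrow> 'g \<Rightarrow> bool" where
  "arch_eq x y \<longleftrightarrow> 0 < x \<and> 0 < y \<and> (\<exists>n\<ge>1. y \<le> nsm n x) \<and> (\<exists>m\<ge>1. x \<le> nsm m y)"

definition arc_class :: "'g::linordered_ab_group_add \<Rightarrow> 'g set" where
  "arc_class x = {y. arch_eq x y}"

definition Arc :: "'g::linordered_ab_group_add set set" where
  "Arc = arc_class ` {x. 0 < x}"

definition arc_le :: "'g::linordered_ab_group_add set \<Rightarrow> 'g set \<Rightarrow> bool" where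
  "arc_le A B \<longleftrightarrow> (\<exists>x\<in>A. \<exists>y\<in>B. (\<forall>n\<ge>1. nsm n x < y) \<or> arch_eq x y)"

text \<open>Arc(G)^perp: Arc(G) with a new least element None adjoined.\<close>
definition Arc_bot :: "'g::linordered_ab_group_add set option set" where
  "Arc_bot = insert None (Some ` Arc)"

fun arc_bot_le :: "'g::linordered_ab_group_add set option \<Rightarrow> 'g set option \<Rightarrow> bool" where
  "arc_bot_le None _ = True"
| "arc_bot_le (Some A) None = False"
| "arc_bot_le (Some A) (Some B) = arc_le A B"

definition dec_coinitial_family ::
  "'b set \<Rightarrow> ('b \<Rightarrow> 'b \<Rightarrow> bool) \<Rightarrow> 'b \<Rightarrow> 'k rel \<Rightarrow> ('k \<Rightarrow> 'b) \<Rightarrow> bool" where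
  "dec_coinitial_family S le b r s \<longleftrightarrow>
     (\<forall>\<alpha>\<in>Field r. s \<alpha> \<in> S - {b}) \<and>
     (\<forall>\<alpha>\<in>Field r. \<forall>\<beta>\<in>Field r. (\<alpha>, \<beta>) \<in> r \<and> \<alpha> \<noteq> \<beta> \<longrightarrow> le (s \<beta>) (s \<alpha>) \<and> s \<beta> \<noteq> s \<alpha>) \<and>
     (\<forall>t\<in>S - {b}. \<exists>\<alpha>\<in>Field r. le (s \<alpha>) t)"

text \<open>is_chi S le b r: the cardinal r equals chi(S), i.e. r is the least nonzero
  cardinal admitting such a family.\<close>
definition is_chi :: "'b set \<Rightarrow> ('b \<Rightarrow> 'b \<Rightarrow> bool) \<Rightarrow> 'b \<Rightarrow> 'k rel \<Rightarrow> bool" where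
  "is_chi S le b r \<longleftrightarrow>
     Card_order r \<and> Field r \<noteq> {} \<and> (\<exists>s. dec_coinitial_family S le b r s) \<and>
     (\<forall>\<mu>::'k rel. Card_order \<mu> \<and> Field \<mu> \<noteq> {} \<and> (\<mu>, r) \<in> ordLess \<longrightarrow>
        \<not> (\<exists>s. dec_coinitial_family S le b \<mu> s))"

text \<open>G in \<G>_\<kappa>: chi(Arc(G)^perp) = \<kappa>.  The group is the type 'g.\<close>
definition in_G_kappa :: "'g::linordered_ab_group_add itself \<Rightarrow> 'k rel \<Rightarrow> bool" where
  "in_G_kappa _ r \<longleftrightarrow> is_chi (Arc_bot :: 'g set option set) arc_bot_le None r"

definition Gmetric :: "'a set \<Rightarrow> ('a \<Rightarrow> 'a \<Rightarrow> 'g::linordered_ab_group_add) \<Rightarrow> bool" where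
  "Gmetric S d \<longleftrightarrow> (\<forall>x\<in>S. \<forall>y\<in>S. (d x y = 0 \<longleftrightarrow> x = y) \<and> 0 \<le> d x y \<and> d x y = d y x \<and>
                      (\<forall>z\<in>S. d x z \<le> d x y + d y z))"

definition gball :: "'a set \<Rightarrow> ('a \<Rightarrow> 'a \<Rightarrow> 'g::linordered_ab_group_add) \<Rightarrow> 'a \<Rightarrow> 'g \<Rightarrow> 'a set" where
  "gball S d x e = {y\<in>S. d x y < e}"

definition Met :: "'a topology \<Rightarrow> ('a \<Rightarrow> 'a \<Rightarrow> 'g::linordered_ab_group_add) \<Rightarrow> bool" where
  "Met X d \<longleftrightarrow> Gmetric (topspace X) d \<and>
     X = topology_generated_by {gball (topspace X) d x e | x e. x \<in> topspace X \<and> 0 < e}"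

definition cauchy_filter :: "'a topology \<Rightarrow> ('a \<Rightarrow> 'a \<Rightarrow> 'g::linordered_ab_group_add) \<Rightarrow> 'a filter \<Rightarrow> bool" where
  "cauchy_filter X d F \<longleftrightarrow> eventually (\<lambda>x. x \<in> topspace X) F \<and>
     (\<forall>e>0. \<exists>A. eventually (\<lambda>x. x \<in> A) F \<and> (\<forall>x\<in>A. \<forall>y\<in>A. d x y < e))"

text \<open>kappa-dagger = kappa+1 = Field r plus a top ordinal None (= kappa itself);
  ord_le is the ordinal order on kappa+1 (the dagger order is its reverse).\<close>
definition dagger :: "'k rel \<Rightarrow> 'k option set" where
  "dagger r = insert None (Some ` Field r)"

fun ord_le :: "'k rel \<Rightarrow> 'k option \<Rightarrow> 'k option \<Rightarrow> bool" where
  "ord_le r _ None = True"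
| "ord_le r None (Some b) = False"
| "ord_le r (Some a) (Some b) = ((a, b) \<in> r)"

definition isotone_embedding :: "'k rel \<Rightarrow> ('k option \<Rightarrow> 'g::linordered_ab_group_add) \<Rightarrow> bool" where
  "isotone_embedding r l \<longleftrightarrow> inj_on l (dagger r) \<and>
     (\<forall>a\<in>dagger r. \<forall>b\<in>dagger r. ord_le r a b \<longrightarrow> l b \<le> l a)"

definition g_characteristic :: "'k rel \<Rightarrow> ('k option \<Rightarrow> 'g::linordered_ab_group_add) \<Rightarrow> bool" where
  "g_characteristic r l \<longleftrightarrow> l ` dagger r \<subseteq> {x. 0 \<le> x} \<and> 0 \<in> l ` dagger r \<and>
     (\<forall>s>0. \<exists>t\<in>l ` dagger r - {0}. t \<le> s)"

end

theory Submission
  imports Defs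
begin

lemma nsm_Suc: "nsm (Suc n) x = x + nsm n x"
  by (simp add: nsm_def add.commute)

lemma nsm_0 [simp]: "nsm n 0 = 0" and nsm_1 [simp]: "nsm 1 x = x"
  by (simp_all add: nsm_def)

lemma nsm_add: "nsm (a + b) x = nsm a x + nsm b x"
  by (induction a) (simp_all add: nsm_Suc nsm_def add.assoc)

lemma nsm_mono: "(x::'g::linordered_ab_group_add) \<le> y \<Longrightarrow> nsm n x \<le> nsm n y"
  unfolding nsm_def by (rule sum_mono) simp

lemma nsm_distrib: "nsm n (x + y) = nsm n x + nsm n (y::'g::linordered_ab_group_add)"
  unfolding nsm_def by (rule sum.distrib)

lemma l_basic:
  fixes l :: "'k option \<Rightarrow> 'g::linordered_ab_group_add"
  assumes l: "isotone_embedding r l" "g_characteristic r l"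
  shows "l None = 0" "\<And>a. a \<in> Field r \<Longrightarrow> 0 < l (Some a)"
    "\<And>a b. a \<in> Field r \<Longrightarrow> b \<in> Field r \<Longrightarrow> (a, b) \<in> r \<Longrightarrow> l (Some b) \<le> l (Some a)"
proof -
  have N: "None \<in> dagger r" by (simp add: dagger_def)
  have le: "\<And>x. x \<in> dagger r \<Longrightarrow> l None \<le> l x"
  proof -
    fix x assume "x \<in> dagger r"
    moreover have "ord_le r x None" by (cases x) auto
    ultimately show "l None \<le> l x" using l(1) N unfolding isotone_embedding_def by blast
  qed
  have nn: "\<And>x. x \<in> dagger r \<Longrightarrow> 0 \<le> l x" using l(2) unfolding g_characteristic_def by auto
  from l(2) obtain z where z: "z \<in> dagger r" "l z = 0" unfolding g_characteristic_def by auto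
  show L0: "l None = 0" using le[OF z(1)] z(2) nn[OF N] by simp
  show "0 < l (Some a)" if "a \<in> Field r" for a
  proof -
    have S: "Some a \<in> dagger r" using that by (simp add: dagger_def)
    have "l (Some a) \<noteq> l None" using l(1) S N unfolding isotone_embedding_def inj_on_def by blast
    thus ?thesis using nn[OF S] L0 by simp
  qed
  show "l (Some b) \<le> l (Some a)" if "a \<in> Field r" "b \<in> Field r" "(a, b) \<in> r" for a b
    using l(1) that unfolding isotone_embedding_def dagger_def by auto
qed

lemma arch_eq_refl: "0 < x \<Longrightarrow> arch_eq x x"
  unfolding arch_eq_def by (auto intro!: exI[of _ 1] simp: nsm_def)

lemma key_rho:
  fixes l :: "'k option \<Rightarrow> 'g::linordered_ab_group_add"
  assumes G: "in_G_kappa TYPE('g) r"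
    and l: "isotone_embedding r l" "g_characteristic r l"
    and a: "a \<in> Field r"
  shows "\<exists>\<rho>>0. \<forall>g. 0 \<le> g \<longrightarrow> g < \<rho> \<longrightarrow> (\<forall>n\<ge>1. nsm n g < l (Some a))"
proof (cases "\<exists>c>0. \<forall>n\<ge>1. nsm n c < l (Some a)")
  case True
  then obtain c where c: "c > 0" "\<forall>n\<ge>1. nsm n c < l (Some a)" by blast
  show ?thesis
  proof (intro exI[of _ c] conjI allI impI)
    fix g n :: 'g and m :: nat assume "0 \<le> g" "g < c" "1 \<le> m"
    then show "nsm m g < l (Some a)" using nsm_mono[of g c m] c by force
  qed (rule c(1))
next
  case False
  define L where "L = l (Some a)"
  have Lpos: "0 < L" using l_basic(2)[OF l a] L_def by simp
  have big: "\<exists>n\<ge>1. L \<le> nsm n c" if "c > 0" for c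
    using False that L_def by (metis not_less)
  have fam: "dec_coinitial_family (Arc_bot :: 'g set option set) arc_bot_le None
      (card_of {a}) (\<lambda>_. Some (arc_class L))"
  proof -
    have p1: "\<forall>x\<in>{a}. Some (arc_class L) \<in> (Arc_bot :: 'g set option set) - {None}"
      using Lpos by (auto simp: Arc_bot_def Arc_def)
    have p3: "\<forall>t\<in>(Arc_bot :: 'g set option set) - {None}. \<exists>\<alpha>\<in>{a}. arc_bot_le (Some (arc_class L)) t"
    proof
      fix t :: "'g set option" assume that: "t \<in> Arc_bot - {None}"
      have "t \<in> Some ` Arc" using that unfolding Arc_bot_def by blast
      then obtain A where A: "A \<in> Arc" "t = Some A" by blast
      then obtain g where g: "0 < g" "t = Some (arc_class g)"
        unfolding Arc_def by blast
      have gin: "g \<in> arc_class g" using arch_eq_refl[OF g(1)] by (simp add: arc_class_def)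
      have Lin: "L \<in> arc_class L" using arch_eq_refl[OF Lpos] by (simp add: arc_class_def)
      have "(\<forall>n\<ge>1. nsm n L < g) \<or> arch_eq L g"
      proof (cases "\<exists>m\<ge>1. g \<le> nsm m L")
        case True
        then obtain m where m: "m \<ge> 1" "g \<le> nsm m L" by blast
        obtain n where n: "n \<ge> 1" "L \<le> nsm n g" using big[OF g(1)] by blast
        have "arch_eq L g" unfolding arch_eq_def using Lpos g(1) m n by blast
        then show ?thesis by blast
      next
        case False
        then have "\<forall>n\<ge>1. nsm n L < g" by (meson not_le)
        then show ?thesis by blast
      qed
      then have "arc_le (arc_class L) (arc_class g)"
        unfolding arc_le_def using gin Lin by blast
      then show "\<exists>\<alpha>\<in>{a}. arc_bot_le (Some (arc_class L)) t" using g(2) by auto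
    qed
    show ?thesis unfolding dec_coinitial_family_def Field_card_of using p1 p3 by auto
  qed
  have single: "Field r = {a}"
  proof (rule ccontr)
    assume "Field r \<noteq> {a}"
    then obtain b where b: "b \<in> Field r" "b \<noteq> a" using a by blast
    have "\<not> (\<exists>f. inj_on f (Field r) \<and> f ` Field r \<subseteq> {a})"
    proof
      assume "\<exists>f. inj_on f (Field r) \<and> f ` Field r \<subseteq> {a}"
      then obtain f where f: "inj_on f (Field r)" "f ` Field r \<subseteq> {a}" by blast
      have "f b = a" "f a = a" using f(2) a b(1) by auto
      then have "f b = f a" by simp
      then have "b = a" using inj_onD[OF f(1)] a b(1) by blast
      then show False using b(2) by simp
    qed
    then have lt1: "(card_of {a}, card_of (Field r)) \<in> ordLess" using card_of_ordLess by blast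
    have chi: "is_chi (Arc_bot :: 'g set option set) arc_bot_le None r"
      using G by (simp add: in_G_kappa_def)
    have CO: "Card_order r" using chi by (simp add: is_chi_def)
    have minim: "\<And>\<mu>::'k rel. Card_order \<mu> \<Longrightarrow> Field \<mu> \<noteq> {} \<Longrightarrow> (\<mu>, r) \<in> ordLess \<Longrightarrow>
        \<not> (\<exists>s. dec_coinitial_family (Arc_bot :: 'g set option set) arc_bot_le None \<mu> s)"
      using chi unfolding is_chi_def by (elim conjE) (rule allE, assumption, blast)
    have "(card_of (Field r), r) \<in> ordIso" using CO by (rule card_of_Field_ordIso)
    with lt1 have "(card_of {a}, r) \<in> ordLess" by (rule ordLess_ordIso_trans)
    then have "\<not> (\<exists>s. dec_coinitial_family (Arc_bot :: 'g set option set) arc_bot_le None (card_of {a}) s)"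
      using minim[OF card_of_Card_order] by (simp add: Field_card_of)
    then show False using fam by blast
  qed
  have least: "L \<le> s" if "s > 0" for s
  proof -
    from l(2) that obtain t where t: "t \<in> l ` dagger r - {0}" "t \<le> s"
      unfolding g_characteristic_def by blast
    have "dagger r = {None, Some a}" using single by (simp add: dagger_def)
    then have "t = L" using t(1) l_basic(1)[OF l] L_def by auto
    then show ?thesis using t(2) by simp
  qed
  show ?thesis
  proof (intro exI[of _ L] conjI allI impI)
    fix g :: 'g and n :: nat assume "0 \<le> g" "g < L" "1 \<le> n"
    then have "g = 0" using least[of g] by force
    then show "nsm n g < l (Some a)" using Lpos L_def by simp
  qed (rule Lpos)
qed

lemma met_open:
  fixes d :: "'a \<Rightarrow> 'a \<Rightarrow> 'g::linordered_ab_group_add"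
  assumes d: "Met X d" and U: "U \<subseteq> topspace X"
    and ball: "\<And>x. x \<in> U \<Longrightarrow> \<exists>e>0. gball (topspace X) d x e \<subseteq> U"
  shows "openin X U"
proof -
  define S where "S = {gball (topspace X) d x e | x e. x \<in> topspace X \<and> 0 < e}"
  have XS: "X = topology_generated_by S" using d unfolding Met_def S_def by simp
  have gm: "Gmetric (topspace X) d" using d unfolding Met_def by simp
  show ?thesis
    unfolding openin_subopen[of X U]
  proof
    fix x assume x: "x \<in> U"
    then obtain e where e: "e > 0" "gball (topspace X) d x e \<subseteq> U" using ball by blast
    have xt: "x \<in> topspace X" using x U by blast
    have "gball (topspace X) d x e \<in> S" using xt e(1) unfolding S_def by auto
    then have "openin (topology_generated_by S) (gball (topspace X) d x e)"
      by (rule topology_generated_by_Basis)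
    then have "openin X (gball (topspace X) d x e)" using XS by simp
    moreover have "d x x = 0" using gm xt unfolding Gmetric_def by blast
    then have "x \<in> gball (topspace X) d x e"
      using xt e(1) unfolding gball_def by simp
    ultimately show "\<exists>T. openin X T \<and> x \<in> T \<and> T \<subseteq> U" using e by blast
  qed
qed

theorem lemma2p58:
  fixes X :: "'a topology"
    and d0 :: "'a \<Rightarrow> 'a \<Rightarrow> 'h::linordered_ab_group_add" and r0 :: "'m rel"
    and d1 :: "'a \<Rightarrow> 'a \<Rightarrow> 'j::linordered_ab_group_add"
    and r :: "'k rel"
    and d :: "'a \<Rightarrow> 'a \<Rightarrow> 'g::linordered_ab_group_add"
    and F :: "'a filter"
    and l :: "'k option \<Rightarrow> 'g"
  assumes gauge: "Met X d0" "in_G_kappa TYPE('h) r0" "\<not> finite (Field r0)"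
    and reg: "Card_order r" "regularCard r"
    and MG: "Met X d1" "in_G_kappa TYPE('j) r"
    and G: "in_G_kappa TYPE('g) r"
    and d: "Met X d"
    and F: "cauchy_filter X d F"
    and l: "isotone_embedding r l" "g_characteristic r l"
  shows "\<exists>B :: 'k \<Rightarrow> 'a set. \<forall>\<alpha>\<in>Field r.
           eventually (\<lambda>x. x \<in> B \<alpha>) F \<and> B \<alpha> \<subseteq> topspace X \<and>
           openin X (B \<alpha>) \<and> closedin X (B \<alpha>) \<and>
           (\<forall>x\<in>B \<alpha>. \<forall>y\<in>B \<alpha>. d x y \<le> l (Some \<alpha>)) \<and>
           (\<forall>\<beta>\<in>Field r. (\<alpha>, \<beta>) \<in> r \<longrightarrow> B \<beta> \<subseteq> B \<alpha>)"
proof (cases "F = bot")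
  case True
  show ?thesis by (rule exI[of _ "\<lambda>_. {}"]) (simp add: True)
next
  case Fnb: False
  define T where "T = topspace X"
  have gm: "Gmetric T d" using d unfolding Met_def T_def by simp
  have d0: "\<And>x. x \<in> T \<Longrightarrow> d x x = 0" and dnn: "\<And>x y. x \<in> T \<Longrightarrow> y \<in> T \<Longrightarrow> 0 \<le> d x y"
    and dsym: "\<And>x y. x \<in> T \<Longrightarrow> y \<in> T \<Longrightarrow> d x y = d y x"
    and dtri: "\<And>x y z. x \<in> T \<Longrightarrow> y \<in> T \<Longrightarrow> z \<in> T \<Longrightarrow> d x z \<le> d x y + d y z"
    using gm unfolding Gmetric_def by blast+
  define rho where "rho = (\<lambda>a. SOME \<rho>. \<rho> > 0 \<and> (\<forall>g. 0 \<le> g \<longrightarrow> g < \<rho> \<longrightarrow> (\<forall>n\<ge>1. nsm n g < l (Some a))))"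
  have rho: "rho a > 0" "\<And>g n. 0 \<le> g \<Longrightarrow> g < rho a \<Longrightarrow> 1 \<le> n \<Longrightarrow> nsm n g < l (Some a)"
    if "a \<in> Field r" for a
    using someI_ex[OF key_rho[OF G l that]] unfolding rho_def by blast+
  define E where "E = (\<lambda>a x y. x \<in> T \<and> y \<in> T \<and> (\<forall>n\<ge>1. nsm n (d x y) < l (Some a)))"
  define C where "C = (\<lambda>a x. {y. E a x y})"
  have f1: "E a x y" if "a \<in> Field r" "x \<in> T" "y \<in> T" "d x y < rho a" for a x y
    using rho(2)[OF that(1) dnn[OF that(2,3)] that(4)] that unfolding E_def by blast
  have Esym: "E a y x" if "E a x y" for a x y
    using that dsym unfolding E_def by auto
  have Etrans: "E a x z" if "E a x y" "E a y z" for a x y z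
  proof -
    have T: "x \<in> T" "y \<in> T" "z \<in> T" using that unfolding E_def by auto
    define m where "m = max (d x y) (d y z)"
    have "\<forall>n\<ge>1. nsm n (d x z) < l (Some a)"
    proof (intro allI impI)
      fix n :: nat assume n: "1 \<le> n"
      have "nsm n (d x z) \<le> nsm n (m + m)"
      proof (rule nsm_mono)
        have "d x y + d y z \<le> m + m" unfolding m_def by (rule add_mono) simp_all
        then show "d x z \<le> m + m" using dtri[OF T] by (rule order_trans[rotated])
      qed
      also have "\<dots> = nsm (n + n) m" by (simp add: nsm_distrib nsm_add)
      also have "\<dots> < l (Some a)"
        using that n unfolding E_def m_def by (cases "d x y \<le> d y z") (auto simp: max_def)
      finally show "nsm n (d x z) < l (Some a)" .
    qed
    then show ?thesis using T unfolding E_def by blast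
  qed
  have Erefl: "E a x x" if "a \<in> Field r" "x \<in> T" for a x
    using f1[OF that that(2)] rho(1)[OF that(1)] d0[OF that(2)] by simp
  have Csub: "C a x \<subseteq> T" for a x unfolding C_def E_def by auto
  have Copen: "openin X (C a x)" if "a \<in> Field r" for a x
  proof (rule met_open[OF d])
    show "C a x \<subseteq> topspace X" using Csub T_def by simp
    fix y assume y: "y \<in> C a x"
    show "\<exists>e>0. gball (topspace X) d y e \<subseteq> C a x"
    proof (intro exI[of _ "rho a"] conjI)
      show "gball (topspace X) d y (rho a) \<subseteq> C a x"
      proof
        fix z assume "z \<in> gball (topspace X) d y (rho a)"
        then have "z \<in> T" "d y z < rho a" unfolding gball_def T_def by auto
        moreover have "y \<in> T" using y Csub by blast
        ultimately have "E a y z" using f1 that by blast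
        then show "z \<in> C a x" using y Etrans unfolding C_def by blast
      qed
    qed (rule rho(1)[OF that])
  qed
  have Cclosed: "closedin X (C a x)" if "a \<in> Field r" for a x
  proof -
    have "openin X (T - C a x)"
    proof (rule met_open[OF d])
      show "T - C a x \<subseteq> topspace X" using T_def by auto
      fix y assume y: "y \<in> T - C a x"
      show "\<exists>e>0. gball (topspace X) d y e \<subseteq> T - C a x"
      proof (intro exI[of _ "rho a"] conjI)
        show "gball (topspace X) d y (rho a) \<subseteq> T - C a x"
        proof
          fix z assume "z \<in> gball (topspace X) d y (rho a)"
          then have z: "z \<in> T" "d y z < rho a" unfolding gball_def T_def by auto
          have "E a y z" using f1 that z y by blast
          then have "z \<notin> C a x" using y Etrans Esym unfolding C_def by blast
          then show "z \<in> T - C a x" using z by blast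
        qed
      qed (rule rho(1)[OF that])
    qed
    then show ?thesis unfolding closedin_def T_def using Csub T_def by simp
  qed
  have Cdiam: "d x y \<le> l (Some a)" if "x \<in> C a z" "y \<in> C a z" for a x y z
  proof -
    have "E a x y" using that Esym Etrans unfolding C_def by blast
    then have "nsm 1 (d x y) < l (Some a)" unfolding E_def by blast
    then show ?thesis by (metis nsm_1 less_imp_le)
  qed
  have Cmono: "C b x \<subseteq> C a x" if "a \<in> Field r" "b \<in> Field r" "(a, b) \<in> r" for a b x
  proof
    fix y assume "y \<in> C b x"
    then have "E b x y" by (simp add: C_def)
    then show "y \<in> C a x"
      using l_basic(3)[OF l that] unfolding C_def E_def by (auto intro: less_le_trans)
  qed
  have Cex: "\<exists>x\<in>T. eventually (\<lambda>z. z \<in> C a x) F" if a: "a \<in> Field r" for a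
  proof -
    from F rho(1)[OF a] obtain A where A: "eventually (\<lambda>x. x \<in> A) F"
      "\<forall>x\<in>A. \<forall>y\<in>A. d x y < rho a"
      unfolding cauchy_filter_def by blast
    have ev: "eventually (\<lambda>x. x \<in> A \<and> x \<in> T) F"
      using A(1) F unfolding cauchy_filter_def T_def by (auto intro: eventually_conj)
    obtain x0 where x0: "x0 \<in> A" "x0 \<in> T" using eventually_happens'[OF Fnb ev] by blast
    have "eventually (\<lambda>z. z \<in> C a x0) F"
      using ev by (rule eventually_mono) (use f1 a x0 A(2) in \<open>auto simp: C_def\<close>)
    then show ?thesis using x0 by blast
  qed
  have Cuniq: "C a x = C a y" if ev2: "eventually (\<lambda>z. z \<in> C a x) F" "eventually (\<lambda>z. z \<in> C a y) F" for a x y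
  proof -
    obtain z where "z \<in> C a x" "z \<in> C a y"
      using eventually_happens'[OF Fnb eventually_conj[OF ev2]] by blast
    then have "E a x y" using Esym Etrans unfolding C_def by blast
    then show ?thesis using Esym Etrans unfolding C_def by blast
  qed
  define pt where "pt = (\<lambda>a. SOME x. x \<in> T \<and> eventually (\<lambda>z. z \<in> C a x) F)"
  have pt: "eventually (\<lambda>z. z \<in> C a (pt a)) F" if "a \<in> Field r" for a
    using someI_ex[OF Cex[OF that, unfolded Bex_def]] unfolding pt_def by blast
  show ?thesis
  proof (rule exI[of _ "\<lambda>a. C a (pt a)"], rule ballI)
    fix a assume a: "a \<in> Field r"
    have h1: "eventually (\<lambda>x. x \<in> C a (pt a)) F" using pt[OF a] .
    have h2: "C a (pt a) \<subseteq> topspace X" using Csub T_def by simp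
    have h3: "openin X (C a (pt a))" using Copen[OF a] .
    have h4: "closedin X (C a (pt a))" using Cclosed[OF a] .
    have h5: "\<forall>x\<in>C a (pt a). \<forall>y\<in>C a (pt a). d x y \<le> l (Some a)" using Cdiam by blast
    have h6: "\<forall>b\<in>Field r. (a, b) \<in> r \<longrightarrow> C b (pt b) \<subseteq> C a (pt a)"
    proof (intro ballI impI)
      fix b assume b: "b \<in> Field r" "(a, b) \<in> r"
      have "eventually (\<lambda>z. z \<in> C a (pt b)) F"
        using pt[OF b(1)] by (rule eventually_mono) (use Cmono[OF a b] in blast)
      then have "C a (pt b) = C a (pt a)" using Cuniq pt[OF a] by blast
      then show "C b (pt b) \<subseteq> C a (pt a)" using Cmono[OF a b] by blast
    qed
    show "eventually (\<lambda>x. x \<in> C a (pt a)) F \<and> C a (pt a) \<subseteq> topspace X \<and>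
           openin X (C a (pt a)) \<and> closedin X (C a (pt a)) \<and>
           (\<forall>x\<in>C a (pt a). \<forall>y\<in>C a (pt a). d x y \<le> l (Some a)) \<and>
           (\<forall>\<beta>\<in>Field r. (a, \<beta>) \<in> r \<longrightarrow> C \<beta> (pt \<beta>) \<subseteq> C a (pt a))"
      using h1 h2 h3 h4 h5 h6 by blast
  qed
qed

end
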